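(* Let $\sigma:\mathcal{A}^*\to\mathcal{B}^*$ be a return morphism for two distinct words $w,w'\in\mathcal{B}^+$ with $|w|\le|w'|$, and let $X$ be a shift space over $\mathcal{A}$. Then: (1) $w$ is a proper prefix of $w'$; (2) $\sigma$ is a return morphism for every prefix of $w'$ of length at least $|w|$; (3) $w$ is not right special in $\sigma\cdot X$; (4) if $w'$ has maximal length among the words for which $\sigma$ is a return morphism, then $w'$ is right special in $\sigma\cdot X$.
   Context: $\mathcal{A},\mathcal{B}$ are finite alphabets. A shift space over $\mathcal{A}$ is a nonempty closed shift-invariant $X\subseteq\mathcal{A}^{\mathbb{Z}}$ whose language contains every letter of $\mathcal{A}$. Morphisms are non-erasing monoid morphisms extended to $\mathcal{A}^{\mathbb{Z}}$ by concatenation, and $\sigma\cdot X=\{S^k\sigma(x): x\in X, 0\le k<|\sigma(x_0)|\}$ where $S$ is the shift. A return morphism for $w\in\mathcal{B}^+$ is an injective morphism $\sigma:\mathcal{A}^*\to\mathcal{B}^*$ such that for every $a\in\mathcal{A}$, $\sigma(a)w$ contains exactly two occurrences of $w$, one as a proper prefix and one as a proper suffix. A word $u$ is right special in a shift $Y$ if there are at least two letters $b$ with $ub$ in the language of $Y$. *)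

theory Defs
  imports Main "HOL-Library.Sublist"
begin

text \<open>Bi-infinite sequences over an alphabet 'a are functions int => 'a.
  The alphabets are the (finite) universes of the types 'a and 'b.\<close>

definition shift :: "(int \<Rightarrow> 'a) \<Rightarrow> (int \<Rightarrow> 'a)" where
  "shift x = (\<lambda>i. x (i + 1))"

definition factor_at :: "(int \<Rightarrow> 'a) \<Rightarrow> int \<Rightarrow> nat \<Rightarrow> 'a list" where
  "factor_at x i n = map (\<lambda>j. x (i + int j)) [0..<n]"

definition lang :: "(int \<Rightarrow> 'a) set \<Rightarrow> 'a list set" where
  "lang Y = {u. \<exists>y\<in>Y. \<exists>i. u = factor_at y i (length u)}"

text \<open>Closedness in the product topology of discrete spaces on 'a^Z:
  a point all of whose central blocks are approximated by points of X lies in X.\<close>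
definition shift_closed :: "(int \<Rightarrow> 'a) set \<Rightarrow> bool" where
  "shift_closed X \<longleftrightarrow>
     (\<forall>x. (\<forall>n::nat. \<exists>y\<in>X. \<forall>i. \<bar>i\<bar> \<le> int n \<longrightarrow> y i = x i) \<longrightarrow> x \<in> X)"

definition shift_space :: "(int \<Rightarrow> 'a::finite) set \<Rightarrow> bool" where
  "shift_space X \<longleftrightarrow> X \<noteq> {} \<and> shift_closed X \<and> shift ` X = X \<and>
     (\<forall>a::'a. [a] \<in> lang X)"

definition morph :: "('a \<Rightarrow> 'b list) \<Rightarrow> 'a list \<Rightarrow> 'b list" where
  "morph \<sigma> u = concat (map \<sigma> u)"

definition non_erasing :: "('a \<Rightarrow> 'b list) \<Rightarrow> bool" where
  "non_erasing \<sigma> \<longleftrightarrow> (\<forall>a. \<sigma> a \<noteq> [])"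

text \<open>Position in sigma(x) at which the image of x_n starts (sigma(x_0) starts at 0).\<close>
definition morph_offset :: "('a \<Rightarrow> 'b list) \<Rightarrow> (int \<Rightarrow> 'a) \<Rightarrow> int \<Rightarrow> int" where
  "morph_offset \<sigma> x n =
     (if 0 \<le> n then (\<Sum>i\<in>{0..<n}. int (length (\<sigma> (x i))))
      else - (\<Sum>i\<in>{n..<0}. int (length (\<sigma> (x i)))))"

text \<open>Extension of sigma to 'a^Z by concatenation:
  sigma(x) = ... sigma(x_{-1}) . sigma(x_0) sigma(x_1) ...\<close>
definition morph_seq :: "('a \<Rightarrow> 'b list) \<Rightarrow> (int \<Rightarrow> 'a) \<Rightarrow> (int \<Rightarrow> 'b)" where
  "morph_seq \<sigma> x j =
     (let n = (THE n. morph_offset \<sigma> x n \<le> j \<and> j < morph_offset \<sigma> x (n + 1))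
      in \<sigma> (x n) ! nat (j - morph_offset \<sigma> x n))"

definition morph_image :: "('a \<Rightarrow> 'b list) \<Rightarrow> (int \<Rightarrow> 'a) set \<Rightarrow> (int \<Rightarrow> 'b) set" where
  "morph_image \<sigma> X =
     {(shift ^^ k) (morph_seq \<sigma> x) | x k. x \<in> X \<and> k < length (\<sigma> (x 0))}"

definition occurrences :: "'b list \<Rightarrow> 'b list \<Rightarrow> nat set" where
  "occurrences w v = {i. i + length w \<le> length v \<and> take (length w) (drop i v) = w}"

definition return_morphism :: "('a \<Rightarrow> 'b list) \<Rightarrow> 'b list \<Rightarrow> bool" where
  "return_morphism \<sigma> w \<longleftrightarrow> w \<noteq> [] \<and> non_erasing \<sigma> \<and> inj (morph \<sigma>) \<and>
     (\<forall>a. card (occurrences w (\<sigma> a @ w)) = 2 \<and>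
          strict_prefix w (\<sigma> a @ w) \<and> strict_suffix w (\<sigma> a @ w))"

definition right_special :: "(int \<Rightarrow> 'b) set \<Rightarrow> 'b list \<Rightarrow> bool" where
  "right_special Y u \<longleftrightarrow> card {b. u @ [b] \<in> lang Y} \<ge> 2"

end

theory Submission
  imports Defs
begin

lemma occ_w:
  assumes "return_morphism \<sigma> w"
  shows "occurrences w (\<sigma> a @ w) = {0, length (\<sigma> a)}"
proof -
  have c: "card (occurrences w (\<sigma> a @ w)) = 2" and p: "strict_prefix w (\<sigma> a @ w)"
    using assms unfolding return_morphism_def by auto
  have ne: "\<sigma> a \<noteq> []" using assms unfolding return_morphism_def non_erasing_def by auto
  obtain zs where zs: "\<sigma> a @ w = w @ zs" using p unfolding strict_prefix_def prefix_def by blast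
  have "take (length w) (\<sigma> a @ w) = w" unfolding zs by simp
  hence "0 \<in> occurrences w (\<sigma> a @ w)" unfolding occurrences_def by simp
  moreover have "length (\<sigma> a) \<in> occurrences w (\<sigma> a @ w)" unfolding occurrences_def by simp
  moreover have "finite (occurrences w (\<sigma> a @ w))" using c card.infinite by fastforce
  moreover have "card {0, length (\<sigma> a)} = 2" using ne by simp
  ultimately show ?thesis using c card_subset_eq[of "occurrences w (\<sigma> a @ w)" "{0, length (\<sigma> a)}"] by simp
qed

lemma take_app_le: "n \<le> length xs \<Longrightarrow> take n (xs @ ys) = take n xs" by simp

lemma occ_ext:
  assumes rm: "return_morphism \<sigma> w" and wv: "prefix w v" and v: "prefix v (\<sigma> a @ v)"
  shows "occurrences v (\<sigma> a @ v) = {0, length (\<sigma> a)}"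
proof
  obtain zs where zs: "\<sigma> a @ v = v @ zs" using v prefix_def by blast
  show "{0, length (\<sigma> a)} \<subseteq> occurrences v (\<sigma> a @ v)"
  proof -
    have "take (length v) (\<sigma> a @ v) = v" using zs by (metis append_eq_conv_conj)
    thus ?thesis unfolding occurrences_def by simp
  qed
  show "occurrences v (\<sigma> a @ v) \<subseteq> {0, length (\<sigma> a)}"
  proof
    fix i assume "i \<in> occurrences v (\<sigma> a @ v)"
    hence i1: "i \<le> length (\<sigma> a)" and i2: "take (length v) (drop i (\<sigma> a @ v)) = v"
      unfolding occurrences_def by auto
    obtain t where vt: "v = w @ t" using wv prefix_def by blast
    have "take (length w) (drop i (\<sigma> a @ w)) = w"
    proof -
      have "take (length w) (take (length v) (drop i (\<sigma> a @ v))) = w" using i2 vt by simp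
      moreover have "take (length w) (take (length v) (drop i (\<sigma> a @ v))) = take (length w) (drop i (\<sigma> a @ v))"
      proof -
        have "length w \<le> length v" using vt by simp
        thus ?thesis by (simp only: take_take min.absorb1)
      qed
      ultimately have tw: "take (length w) (drop i (\<sigma> a @ v)) = w" by simp
      have d1: "drop i (\<sigma> a @ v) = (drop i (\<sigma> a) @ w) @ t" using i1 vt by simp
      have d2: "drop i (\<sigma> a @ w) = drop i (\<sigma> a) @ w" using i1 by simp
      have L: "length w \<le> length (drop i (\<sigma> a) @ w)" by simp
      have "take (length w) (drop i (\<sigma> a @ v)) = take (length w) (drop i (\<sigma> a) @ w)"
        unfolding d1 by (rule take_app_le[OF L])
      thus ?thesis using tw d2 by simp
    qed
    hence "i \<in> occurrences w (\<sigma> a @ w)" using i1 unfolding occurrences_def by simp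
    thus "i \<in> {0, length (\<sigma> a)}" using occ_w[OF rm] by simp
  qed
qed

lemma return_ext:
  assumes rm: "return_morphism \<sigma> w" and wv: "prefix w v" and v: "\<And>a. prefix v (\<sigma> a @ v)"
  shows "return_morphism \<sigma> v"
proof -
  have ne: "\<And>a. \<sigma> a \<noteq> []" using rm unfolding return_morphism_def non_erasing_def by auto
  have "w \<noteq> []" using rm unfolding return_morphism_def by auto
  hence "v \<noteq> []" using wv by auto
  moreover have "\<forall>a. card (occurrences v (\<sigma> a @ v)) = 2 \<and>
          strict_prefix v (\<sigma> a @ v) \<and> strict_suffix v (\<sigma> a @ v)"
  proof
    fix a
    show "card (occurrences v (\<sigma> a @ v)) = 2 \<and>
          strict_prefix v (\<sigma> a @ v) \<and> strict_suffix v (\<sigma> a @ v)"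
      using occ_ext[OF rm wv v] ne[of a] v[of a]
      by (auto simp: strict_prefix_def strict_suffix_def suffix_def)
  qed
  ultimately show ?thesis using rm unfolding return_morphism_def by auto
qed

lemma pref_morph:
  assumes "return_morphism \<sigma> u" shows "prefix u (morph \<sigma> xs @ u)"
proof (induction xs)
  case Nil then show ?case by (simp add: morph_def)
next
  case (Cons a xs)
  have 1: "prefix u (\<sigma> a @ u)" using assms unfolding return_morphism_def strict_prefix_def by blast
  have 2: "prefix (\<sigma> a @ u) (\<sigma> a @ morph \<sigma> xs @ u)" using Cons by simp
  have "morph \<sigma> (a#xs) @ u = \<sigma> a @ morph \<sigma> xs @ u" by (simp add: morph_def)
  then show ?case using prefix_order.trans[OF 1 2] by simp
qed

lemma pref_morph2:
  assumes "return_morphism \<sigma> u" "length u \<le> length (morph \<sigma> xs)" shows "prefix u (morph \<sigma> xs)"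
  by (rule prefix_length_prefix[OF pref_morph[OF assms(1), of xs] _ assms(2)]) simp

lemma len_morph: "non_erasing \<sigma> \<Longrightarrow> length (morph \<sigma> xs) \<ge> length xs"
proof (induction xs)
  case Nil then show ?case by (simp add: morph_def)
next
  case (Cons a xs)
  then have "\<sigma> a \<noteq> []" unfolding non_erasing_def by auto
  then show ?case using Cons by (simp add: morph_def Suc_le_eq length_greater_0_conv[symmetric] del: length_greater_0_conv)
qed



lemma off_0: "morph_offset \<sigma> x 0 = 0" by (simp add: morph_offset_def)

lemma off_Suc: "morph_offset \<sigma> x (n+1) = morph_offset \<sigma> x n + int (length (\<sigma> (x n)))"
proof (cases "n \<ge> 0")
  case True
  have "{0..<n+1} = insert n {0..<n}" using True by auto
  then show ?thesis using True by (simp add: morph_offset_def)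
next
  case False
  show ?thesis
  proof (cases "n = -1")
    case True
    have "{-1..<0::int} = {-1}" by auto
    then show ?thesis using True by (simp add: morph_offset_def)
  next
    case F: False
    have "{n..<0} = insert n {n+1..<0}" using False by auto
    then show ?thesis using False F by (simp add: morph_offset_def)
  qed
qed

definition blk :: "('a \<Rightarrow> 'b list) \<Rightarrow> (int \<Rightarrow> 'a) \<Rightarrow> int \<Rightarrow> nat \<Rightarrow> 'b list" where
  "blk \<sigma> x n k = morph \<sigma> (map (\<lambda>i. x (n + int i)) [0..<k])"

lemma blk_Suc: "blk \<sigma> x n (Suc k) = blk \<sigma> x n k @ \<sigma> (x (n + int k))"
  by (simp add: blk_def morph_def)

lemma blk_cons: "blk \<sigma> x n (Suc k) = \<sigma> (x n) @ blk \<sigma> x (n+1) k"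
proof -
  have "[0..<Suc k] = 0 # map Suc [0..<k]" by (simp add: upt_conv_Cons map_Suc_upt)
  then show ?thesis by (simp add: blk_def morph_def comp_def algebra_simps)
qed

lemma off_add: "morph_offset \<sigma> x (n + int k) = morph_offset \<sigma> x n + int (length (blk \<sigma> x n k))"
proof (induction k)
  case 0 then show ?case by (simp add: blk_def morph_def)
next
  case (Suc k)
  have "morph_offset \<sigma> x (n + int (Suc k)) = morph_offset \<sigma> x (n + int k + 1)" by (simp add: algebra_simps)
  also have "\<dots> = morph_offset \<sigma> x (n + int k) + int (length (\<sigma> (x (n + int k))))" by (rule off_Suc)
  finally show ?case using Suc by (simp add: blk_Suc)
qed

lemma len_blk: assumes "non_erasing \<sigma>" shows "k \<le> length (blk \<sigma> x n k)"
  using len_morph[OF assms, of "map (\<lambda>i. x (n + int i)) [0..<k]"] by (simp add: blk_def)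

lemma off_ge: assumes ne: "non_erasing \<sigma>" shows "morph_offset \<sigma> x (n + int k) \<ge> morph_offset \<sigma> x n + int k"
  using off_add[of \<sigma> x n k] len_blk[OF ne, of k x n] by simp

lemma find_block_aux:
  "\<forall>a. f a \<le> (j::int) \<longrightarrow> j < f (a + int k) \<longrightarrow> (\<exists>n. f n \<le> j \<and> j < f (n+1))"
proof (induction k)
  case 0 then show ?case by auto
next
  case (Suc k)
  show ?case
  proof (intro allI impI)
    fix a assume a1: "f a \<le> j" and a2: "j < f (a + int (Suc k))"
    show "\<exists>n. f n \<le> j \<and> j < f (n+1)"
    proof (cases "j < f (a+1)")
      case True then show ?thesis using a1 by blast
    next
      case False
      have e: "a + int (Suc k) = (a+1) + int k" by simp
      have "j < f ((a+1) + int k)" using a2 unfolding e .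
      then show ?thesis using Suc[rule_format, of "a+1"] False by auto
    qed
  qed
qed

lemma find_block:
  assumes ne: "non_erasing \<sigma>"
  shows "\<exists>n. morph_offset \<sigma> x n \<le> j \<and> j < morph_offset \<sigma> x (n+1)"
proof -
  let ?f = "morph_offset \<sigma> x"
  let ?m = "nat \<bar>j\<bar>"
  have "?f (- int ?m + int ?m) \<ge> ?f (- int ?m) + int ?m" using off_ge[OF ne] by blast
  hence 1: "?f (- int ?m) \<le> j" using off_0[of \<sigma> x] by simp
  have 3: "?f (0 + int (Suc ?m)) \<ge> ?f 0 + int (Suc ?m)" using off_ge[OF ne] by blast
  have 2: "j < ?f (- int ?m + int (?m + ?m + 1))"
  proof -
    have e: "- int ?m + int (?m+?m+1) = 0 + int (Suc ?m)" by simp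
    have "j < ?f 0 + int (Suc ?m)" using off_0[of \<sigma> x] by simp
    moreover have "?f (- int ?m + int (?m+?m+1)) = ?f (0 + int (Suc ?m))" by (simp only: e)
    ultimately show ?thesis using 3 by linarith
  qed
  show ?thesis using find_block_aux[rule_format, OF 1 2] .
qed

lemma block_unique:
  assumes ne: "non_erasing \<sigma>"
    and "morph_offset \<sigma> x n \<le> j" "j < morph_offset \<sigma> x (n+1)"
    and "morph_offset \<sigma> x m \<le> j" "j < morph_offset \<sigma> x (m+1)"
  shows "n = m"
proof (rule ccontr)
  assume "n \<noteq> m"
  then consider "n < m" | "m < n" by linarith
  then show False
  proof cases
    case 1
    then obtain k where "m = (n+1) + int k" by (metis add.commute zle_iff_zadd zless_imp_add1_zle)
    then show False using off_ge[OF ne, of x "n+1" k] assms by auto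
  next
    case 2
    then obtain k where "n = (m+1) + int k" by (metis add.commute zle_iff_zadd zless_imp_add1_zle)
    then show False using off_ge[OF ne, of x "m+1" k] assms by auto
  qed
qed

lemma ms_eq:
  assumes ne: "non_erasing \<sigma>"
    and "morph_offset \<sigma> x n \<le> j" "j < morph_offset \<sigma> x (n+1)"
  shows "morph_seq \<sigma> x j = \<sigma> (x n) ! nat (j - morph_offset \<sigma> x n)"
proof -
  have "(THE n. morph_offset \<sigma> x n \<le> j \<and> j < morph_offset \<sigma> x (n + 1)) = n"
    using assms block_unique[OF ne] by (intro the_equality) blast+
  then show ?thesis unfolding morph_seq_def Let_def by simp
qed

lemma ms_blk:
  assumes ne: "non_erasing \<sigma>"
  shows "j < length (blk \<sigma> x n k) \<Longrightarrow> morph_seq \<sigma> x (morph_offset \<sigma> x n + int j) = blk \<sigma> x n k ! j"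
proof (induction k arbitrary: j)
  case 0 then show ?case by (simp add: blk_def morph_def)
next
  case (Suc k)
  show ?case
  proof (cases "j < length (blk \<sigma> x n k)")
    case True then show ?thesis using Suc by (simp add: blk_Suc nth_append)
  next
    case False
    let ?L = "length (blk \<sigma> x n k)"
    have o: "morph_offset \<sigma> x (n + int k) = morph_offset \<sigma> x n + int ?L" by (rule off_add)
    have o1: "morph_offset \<sigma> x (n + int k + 1) = morph_offset \<sigma> x (n + int k) + int (length (\<sigma> (x (n + int k))))"
      by (rule off_Suc)
    have jl: "j - ?L < length (\<sigma> (x (n + int k)))" using Suc.prems False by (simp add: blk_Suc)
    have "morph_seq \<sigma> x (morph_offset \<sigma> x n + int j) = \<sigma> (x (n + int k)) ! nat (morph_offset \<sigma> x n + int j - morph_offset \<sigma> x (n + int k))"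
      by (rule ms_eq[OF ne]) (use o o1 False jl in auto)
    also have "\<dots> = \<sigma> (x (n + int k)) ! (j - ?L)" using o False by (simp add: nat_diff_distrib)
    finally show ?thesis using False by (simp add: blk_Suc nth_append)
  qed
qed

lemma factor_blk:
  assumes ne: "non_erasing \<sigma>" and "r + m \<le> length (blk \<sigma> x n k)"
  shows "factor_at (morph_seq \<sigma> x) (morph_offset \<sigma> x n + int r) m = take m (drop r (blk \<sigma> x n k))"
proof (rule nth_equalityI)
  show "length (factor_at (morph_seq \<sigma> x) (morph_offset \<sigma> x n + int r) m) = length (take m (drop r (blk \<sigma> x n k)))"
    using assms by (simp add: factor_at_def)
  fix i assume "i < length (factor_at (morph_seq \<sigma> x) (morph_offset \<sigma> x n + int r) m)"
  hence i: "i < m" by (simp add: factor_at_def)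
  have "morph_seq \<sigma> x (morph_offset \<sigma> x n + int r + int i) = morph_seq \<sigma> x (morph_offset \<sigma> x n + int (r + i))"
    by (simp add: algebra_simps)
  also have "\<dots> = blk \<sigma> x n k ! (r + i)"
  proof -
    have lt: "r + i < length (blk \<sigma> x n k)" using i assms(2) by simp
    show ?thesis by (rule ms_blk[OF ne lt])
  qed
  finally show "factor_at (morph_seq \<sigma> x) (morph_offset \<sigma> x n + int r) m ! i = take m (drop r (blk \<sigma> x n k)) ! i"
    using i assms(2) by (simp add: factor_at_def)
qed

lemma shift_pow: "(shift ^^ k) y = (\<lambda>i. y (i + int k))"
  by (induction k) (auto simp: shift_def algebra_simps)

lemma lang_mi:
  assumes "u \<in> lang (morph_image \<sigma> X)"
  shows "\<exists>x\<in>X. \<exists>p. u = factor_at (morph_seq \<sigma> x) p (length u)"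
proof -
  obtain y i where y: "y \<in> morph_image \<sigma> X" and u: "u = factor_at y i (length u)"
    using assms unfolding lang_def by auto
  obtain x k where x: "x \<in> X" and yx: "y = (shift ^^ k) (morph_seq \<sigma> x)"
    using y unfolding morph_image_def by auto
  have "u = factor_at (morph_seq \<sigma> x) (i + int k) (length u)"
    using u unfolding yx shift_pow factor_at_def by (simp add: algebra_simps)
  thus ?thesis using x by blast
qed

lemma mi_in:
  assumes ne: "non_erasing \<sigma>" and x: "x \<in> X"
  shows "factor_at (morph_seq \<sigma> x) p m \<in> lang (morph_image \<sigma> X)"
proof -
  have "\<sigma> (x 0) \<noteq> []" using ne unfolding non_erasing_def by auto
  hence "morph_seq \<sigma> x \<in> morph_image \<sigma> X" unfolding morph_image_def using x
    by (auto intro!: exI[of _ x] exI[of _ 0])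
  thus ?thesis unfolding lang_def by (auto simp: factor_at_def)
qed



lemma pref_blk: "return_morphism \<sigma> u \<Longrightarrow> length u \<le> length (blk \<sigma> x n k) \<Longrightarrow> prefix u (blk \<sigma> x n k)"
  unfolding blk_def by (rule pref_morph2)

lemma not_rs:
  assumes rw: "return_morphism \<sigma> w" and rw': "return_morphism \<sigma> w'" and sp: "strict_prefix w w'"
  shows "\<not> right_special (morph_image \<sigma> X) w"
proof -
  have ne: "non_erasing \<sigma>" using rw unfolding return_morphism_def by auto
  have lw: "length w < length w'" using sp by (rule prefix_length_less)
  have sub: "{b. w @ [b] \<in> lang (morph_image \<sigma> X)} \<subseteq> {w' ! length w}"
  proof
    fix b assume "b \<in> {b. w @ [b] \<in> lang (morph_image \<sigma> X)}"
    then obtain x p where x: "x \<in> X" and f: "w @ [b] = factor_at (morph_seq \<sigma> x) p (length w + 1)"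
      using lang_mi by fastforce
    obtain n where n1: "morph_offset \<sigma> x n \<le> p" and n2: "p < morph_offset \<sigma> x (n+1)"
      using find_block[OF ne] by blast
    define r where "r = nat (p - morph_offset \<sigma> x n)"
    have pr: "p = morph_offset \<sigma> x n + int r" using n1 r_def by simp
    have rl: "r < length (\<sigma> (x n))" using n2 off_Suc[of \<sigma> x n] pr by simp
    define K where "K = length w' + 1"
    define C where "C = blk \<sigma> x (n+1) K"
    have B: "blk \<sigma> x n (Suc K) = \<sigma> (x n) @ C" unfolding C_def by (rule blk_cons)
    have lC: "K \<le> length C" unfolding C_def by (rule len_blk[OF ne])
    have pC: "prefix w' C" unfolding C_def by (rule pref_blk[OF rw']) (use lC in \<open>simp add: C_def K_def\<close>)
    have pwC: "prefix w C" using sp pC by (meson prefix_order.less_imp_le prefix_order.trans)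
    have fl: "r + (length w + 1) \<le> length (blk \<sigma> x n (Suc K))" using B rl lC K_def lw by simp
    have f2: "w @ [b] = take (length w + 1) (drop r (\<sigma> (x n) @ C))"
      using f factor_blk[OF ne fl] pr B by simp
    have tw: "take (length w) (drop r (\<sigma> (x n) @ C)) = w"
    proof -
      have "take (length w) (drop r (\<sigma> (x n) @ C)) = take (length w) (take (length w + 1) (drop r (\<sigma> (x n) @ C)))"
      proof -
        have e: "min (length w) (length w + 1) = length w" by simp
        show ?thesis by (metis e take_take)
      qed
      also have "\<dots> = take (length w) (w @ [b])" by (simp only: f2)
      also have "\<dots> = w" by simp
      finally show ?thesis .
    qed
    obtain t where Ct: "C = w @ t" using pwC prefix_def by blast
    have d1: "drop r (\<sigma> (x n) @ C) = (drop r (\<sigma> (x n)) @ w) @ t" using rl Ct by simp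
    have d2: "drop r (\<sigma> (x n) @ w) = drop r (\<sigma> (x n)) @ w" using rl by simp
    have L: "length w \<le> length (drop r (\<sigma> (x n)) @ w)" by simp
    have "take (length w) (drop r (\<sigma> (x n) @ C)) = take (length w) (drop r (\<sigma> (x n)) @ w)"
      unfolding d1 by (rule take_app_le[OF L])
    hence "take (length w) (drop r (\<sigma> (x n) @ w)) = w" using tw d2 by simp
    hence "r \<in> occurrences w (\<sigma> (x n) @ w)" using rl unfolding occurrences_def by simp
    hence r0: "r = 0" using occ_w[OF rw] rl by auto
    have lB: "length w' \<le> length (blk \<sigma> x n (Suc K))" using B lC K_def by simp
    have pB: "prefix w' (blk \<sigma> x n (Suc K))" by (rule pref_blk[OF rw' lB])
    then obtain s where Bs: "blk \<sigma> x n (Suc K) = w' @ s" using prefix_def by blast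
    have L2: "length w + 1 \<le> length w'" using lw by simp
    have "w @ [b] = take (length w + 1) (blk \<sigma> x n (Suc K))" using f2 r0 B by simp
    also have "\<dots> = take (length w + 1) w'" unfolding Bs by (rule take_app_le[OF L2])
    finally have "(w @ [b]) ! length w = take (length w + 1) w' ! length w" by simp
    hence "b = w' ! length w" by simp
    thus "b \<in> {w' ! length w}" by simp
  qed
  have "card {b. w @ [b] \<in> lang (morph_image \<sigma> X)} \<le> card {w' ! length w}"
    by (rule card_mono[OF _ sub]) simp
  thus ?thesis unfolding right_special_def by simp
qed

lemma rs_max:
  fixes \<sigma> :: "'a::finite \<Rightarrow> 'b::finite list" and X :: "(int \<Rightarrow> 'a) set"
  assumes rw': "return_morphism \<sigma> w'" and mx: "\<forall>v. return_morphism \<sigma> v \<longrightarrow> length v \<le> length w'"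
    and X: "shift_space X"
  shows "right_special (morph_image \<sigma> X) w'"
proof (rule ccontr)
  assume nrs: "\<not> right_special (morph_image \<sigma> X) w'"
  have ne: "non_erasing \<sigma>" using rw' unfolding return_morphism_def by auto
  define S where "S = {b. w' @ [b] \<in> lang (morph_image \<sigma> X)}"
  have cS: "card S < 2" using nrs unfolding right_special_def S_def by simp
  have fS: "finite S" by simp
  have uniq: "c = d" if "c \<in> S" "d \<in> S" for c d
  proof (rule ccontr)
    assume cd: "c \<noteq> d"
    have "card {c,d} \<le> card S" using fS that by (intro card_mono) auto
    then show False using cS cd by simp
  qed
  have key: "\<exists>c\<in>S. prefix (w' @ [c]) (\<sigma> a @ w' @ [c])" for a
  proof -
    have "[a] \<in> lang X" using X unfolding shift_space_def by blast
    then obtain y i where y: "y \<in> X" and yi: "[a] = factor_at y i 1" unfolding lang_def by force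
    hence ya: "y i = a" by (simp add: factor_at_def)
    define K where "K = length w' + 1"
    define C where "C = blk \<sigma> y (i+1) K"
    define B where "B = blk \<sigma> y i (Suc K)"
    have BC: "B = \<sigma> a @ C" unfolding B_def C_def by (simp add: blk_cons ya)
    have lC: "K \<le> length C" unfolding C_def by (rule len_blk[OF ne])
    have lB: "length C \<le> length B" using BC by simp
    have pC: "prefix w' C" unfolding C_def by (rule pref_blk[OF rw']) (use lC in \<open>simp add: C_def K_def\<close>)
    have pB: "prefix w' B" unfolding B_def by (rule pref_blk[OF rw']) (use lC lB in \<open>simp add: B_def K_def\<close>)
    define c where "c = C ! length w'"
    define d where "d = B ! length w'"
    have hc: "w' @ [c] = take (length w' + 1) C"
    proof -
      have "take (length w') C = w'" using pC unfolding prefix_def by auto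
      moreover have "length w' < length C" using lC K_def by simp
      ultimately show ?thesis unfolding c_def by (simp add: take_Suc_conv_app_nth)
    qed
    have hd: "w' @ [d] = take (length w' + 1) B"
    proof -
      have "take (length w') B = w'" using pB unfolding prefix_def by auto
      moreover have "length w' < length B" using lC lB K_def by simp
      ultimately show ?thesis unfolding d_def by (simp add: take_Suc_conv_app_nth)
    qed
    have "c \<in> S"
    proof -
      have l: "0 + (length w' + 1) \<le> length (blk \<sigma> y (i+1) K)" using lC K_def C_def by simp
      have "factor_at (morph_seq \<sigma> y) (morph_offset \<sigma> y (i+1) + int 0) (length w' + 1) = w' @ [c]"
        using factor_blk[OF ne l] hc C_def by simp
      moreover have "factor_at (morph_seq \<sigma> y) (morph_offset \<sigma> y (i+1) + int 0) (length w' + 1) \<in> lang (morph_image \<sigma> X)"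
        by (rule mi_in[OF ne y])
      ultimately show ?thesis unfolding S_def by simp
    qed
    moreover have "d \<in> S"
    proof -
      have l: "0 + (length w' + 1) \<le> length (blk \<sigma> y i (Suc K))" using lC lB K_def B_def by simp
      have "factor_at (morph_seq \<sigma> y) (morph_offset \<sigma> y i + int 0) (length w' + 1) = w' @ [d]"
        using factor_blk[OF ne l] hd B_def by simp
      moreover have "factor_at (morph_seq \<sigma> y) (morph_offset \<sigma> y i + int 0) (length w' + 1) \<in> lang (morph_image \<sigma> X)"
        by (rule mi_in[OF ne y])
      ultimately show ?thesis unfolding S_def by simp
    qed
    ultimately have cd: "c = d" using uniq by blast
    have "\<sigma> a @ w' @ [c] = take (length (\<sigma> a) + (length w' + 1)) B" using hc BC by simp
    moreover have "w' @ [c] = take (length w' + 1) (take (length (\<sigma> a) + (length w' + 1)) B)"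
      using hd cd by simp
    moreover have "prefix (take (length w' + 1) (take (length (\<sigma> a) + (length w' + 1)) B)) (take (length (\<sigma> a) + (length w' + 1)) B)"
      by (rule take_is_prefix)
    ultimately have "prefix (w' @ [c]) (\<sigma> a @ w' @ [c])" by simp
    thus ?thesis using \<open>c \<in> S\<close> by blast
  qed
  obtain c0 where c0: "c0 \<in> S" using key[of undefined] by blast
  have "return_morphism \<sigma> (w' @ [c0])"
  proof (rule return_ext[OF rw'])
    show "prefix w' (w' @ [c0])" by simp
    fix a
    obtain c where cS: "c \<in> S" and pc: "prefix (w' @ [c]) (\<sigma> a @ w' @ [c])" using key by blast
    have "c = c0" using uniq[OF cS c0] .
    then show "prefix (w' @ [c0]) (\<sigma> a @ w' @ [c0])" using pc by simp
  qed
  then have "length (w' @ [c0]) \<le> length w'" using mx by blast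
  thus False by simp
qed


theorem mainTheorem3:
  fixes \<sigma> :: "'a::finite \<Rightarrow> 'b::finite list"
    and w w' :: "'b list"
    and X :: "(int \<Rightarrow> 'a) set"
  assumes "return_morphism \<sigma> w" and "return_morphism \<sigma> w'"
    and "w \<noteq> w'" and "length w \<le> length w'"
    and "shift_space X"
  shows "strict_prefix w w'
    \<and> (\<forall>v. prefix v w' \<and> length w \<le> length v \<longrightarrow> return_morphism \<sigma> v)
    \<and> \<not> right_special (morph_image \<sigma> X) w
    \<and> ((\<forall>v. return_morphism \<sigma> v \<longrightarrow> length v \<le> length w')
         \<longrightarrow> right_special (morph_image \<sigma> X) w')"
proof -
  note rw = assms(1) and rw' = assms(2)
  have ne: "non_erasing \<sigma>" using rw unfolding return_morphism_def by auto
  define xs where "xs = replicate (length w') (undefined::'a)"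
  have lm: "length w' \<le> length (morph \<sigma> xs)" using len_morph[OF ne, of xs] xs_def by simp
  have p1: "prefix w' (morph \<sigma> xs)" by (rule pref_morph2[OF rw' lm])
  have p2: "prefix w (morph \<sigma> xs)" by (rule pref_morph2[OF rw]) (use lm assms(4) in simp)
  have pw: "prefix w w'" using prefix_length_prefix[OF p2 p1 assms(4)] .
  have sp: "strict_prefix w w'" using pw assms(3) by (simp add: strict_prefix_def)
  moreover have "\<forall>v. prefix v w' \<and> length w \<le> length v \<longrightarrow> return_morphism \<sigma> v"
  proof (intro allI impI)
    fix v assume v: "prefix v w' \<and> length w \<le> length v"
    have wv: "prefix w v" using prefix_length_prefix[OF pw] v by blast
    show "return_morphism \<sigma> v"
    proof (rule return_ext[OF rw wv])
      fix a
      have "prefix w' (\<sigma> a @ w')" using rw' unfolding return_morphism_def strict_prefix_def by auto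
      hence q1: "prefix v (\<sigma> a @ w')" using v prefix_order.trans by blast
      have q2: "prefix (\<sigma> a @ v) (\<sigma> a @ w')" using v by simp
      show "prefix v (\<sigma> a @ v)" using prefix_length_prefix[OF q1 q2] by simp
    qed
  qed
  moreover have "\<not> right_special (morph_image \<sigma> X) w" by (rule not_rs[OF rw rw' sp])
  moreover have "(\<forall>v. return_morphism \<sigma> v \<longrightarrow> length v \<le> length w')
         \<longrightarrow> right_special (morph_image \<sigma> X) w'"
    using rs_max[OF rw' _ assms(5)] by blast
  ultimately show ?thesis by blast
qed

end
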